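(* Let $R\subseteq\mathbb N$ be sparse, $n\in\mathbb N^+$, and $\mathbf A=(A_1,\dots,A_n)$ an $n$-tuple of operators on $R$ with $A_i\neq_R0$ for all $i$. Then there is $\Delta_0$ such that for every $\Delta\ge\Delta_0$ and all distinct $z,w\in R^n_\Delta$, letting $e=\min\{i: z_i\ne w_i\}$, we have $\mathbf A\cdot z>\mathbf A\cdot w$ if and only if ($z_e>w_e$ and $A_e>_R0$) or ($z_e<w_e$ and $A_e<_R0$). In particular, $z\mapsto\mathbf A\cdot z$ is injective on $R^n_\Delta$.
   Context: Let $R\subseteq\mathbb N$ be infinite, enumerated increasingly as $(r_n)_{n\in\mathbb N}$; $\sigma:R\to R$ is the successor map $\sigma(r_n)=r_{n+1}$ and $\sigma^k$ its $k$-fold iterate ($\sigma^0=\mathrm{id}$). An operator on $R$ is a function $R\to\mathbb Z$, $z\mapsto a_m\sigma^m(z)+\dots+a_0\sigma^0(z)$ with $a_i\in\mathbb Z$. For an operator $A$: $A=_R0$ if $Az=0$ for all $z\in R$; $A>_R0$ (resp. $A<_R0$) if $Az>0$ (resp. $Az<0$) for all but finitely many $z\in R$. $R$ is sparse if every operator $A$ satisfies (S1) $A=_R0$ or $A>_R0$ or $A<_R0$; and (S2) if $A>_R0$ then there is $\Delta\in\mathbb N$ with $A(\sigma^\Delta z)>z$ for all $z\in R$. For an $n$-tuple of operators $\mathbf A$ and $z\in R^n$, $\mathbf A\cdot z=A_1z_1+\dots+A_nz_n$. For $\tilde R\subseteq R$ and $\Delta\in\mathbb N$, $\tilde R^n_\Delta=\{(z_1,\dots,z_n)\in\tilde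 R^n: z_i\ge\sigma^\Delta z_{i+1}\text{ for }1\le i\le n\}$ where $z_{n+1}:=\min\tilde R$. *)

theory Defs
  imports Main "HOL-Library.Infinite_Set"
begin

definition enumR :: "nat set \<Rightarrow> nat \<Rightarrow> nat" where
  "enumR R k = Infinite_Set.enumerate R k"

definition sigma :: "nat set \<Rightarrow> nat \<Rightarrow> nat" where
  "sigma R z = enumR R (Suc (THE k. enumR R k = z))"

text \<open>An operator a_m sigma^m + ... + a_0 sigma^0 is given by its coefficient list
  [a_0, ..., a_m]; its value at z.\<close>
definition op_apply :: "nat set \<Rightarrow> int list \<Rightarrow> nat \<Rightarrow> int" where
  "op_apply R a z = (\<Sum>i<length a. a ! i * int ((sigma R ^^ i) z))"

definition op_zero :: "nat set \<Rightarrow> int list \<Rightarrow> bool" where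
  "op_zero R a \<longleftrightarrow> (\<forall>z\<in>R. op_apply R a z = 0)"

definition op_pos :: "nat set \<Rightarrow> int list \<Rightarrow> bool" where
  "op_pos R a \<longleftrightarrow> finite {z \<in> R. \<not> op_apply R a z > 0}"

definition op_neg :: "nat set \<Rightarrow> int list \<Rightarrow> bool" where
  "op_neg R a \<longleftrightarrow> finite {z \<in> R. \<not> op_apply R a z < 0}"

definition sparse :: "nat set \<Rightarrow> bool" where
  "sparse R \<longleftrightarrow> (\<forall>a. (op_zero R a \<or> op_pos R a \<or> op_neg R a) \<and>
     (op_pos R a \<longrightarrow> (\<exists>D. \<forall>z\<in>R. op_apply R a ((sigma R ^^ D) z) > int z)))"

definition dotop :: "nat set \<Rightarrow> int list list \<Rightarrow> nat list \<Rightarrow> int" where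
  "dotop R As z = (\<Sum>i<length As. op_apply R (As ! i) (z ! i))"

text \<open>R^n_Delta (with tilde R = R): z_i >= sigma^Delta z_(i+1) for all i, where z_(n+1) = min R.\<close>
definition RnDelta :: "nat set \<Rightarrow> nat \<Rightarrow> nat \<Rightarrow> nat list set" where
  "RnDelta R n D = {z. length z = n \<and> set z \<subseteq> R \<and>
     (\<forall>i<n. z ! i \<ge> (sigma R ^^ D) (if Suc i < n then z ! Suc i else (LEAST x. x \<in> R)))}"

end

theory Submission imports Defs begin


locale sp = fixes R :: "nat set" assumes inf: "infinite R"
begin

abbreviation "r \<equiv> enumerate R"

lemma r_in: "r k \<in> R" using enumerate_in_set[OF inf] .
lemma r_le_iff: "r m \<le> r n \<longleftrightarrow> m \<le> n" using inf by simp
lemma r_less_iff: "r m < r n \<longleftrightarrow> m < n" using inf by simp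
lemma r_inj: "r m = r n \<longleftrightarrow> m = n" by (metis le_antisym order_refl r_le_iff)
lemma r_ge: "k \<le> r k" using le_enumerate[OF inf] .
lemma r_ex: "z \<in> R \<Longrightarrow> \<exists>k. z = r k" using enumerate_Ex[OF inf] by metis

lemma sigma_r: "sigma R (r k) = r (Suc k)"
  unfolding sigma_def enumR_def using r_inj by simp

lemma sigma_pow_r: "(sigma R ^^ i) (r k) = r (k + i)"
  by (induction i) (auto simp: sigma_r)

lemma least_R: "(LEAST x. x \<in> R) = r 0" by (simp add: enumerate_0)

lemma op_apply_r: "op_apply R a (r k) = (\<Sum>i<length a. a ! i * int (r (k + i)))"
  unfolding op_apply_def sigma_pow_r ..

definition isop :: "(nat \<Rightarrow> int) \<Rightarrow> bool" where
  "isop f \<longleftrightarrow> (\<exists>N c. \<forall>k. f k = (\<Sum>i<N. c i * int (r (k + i))))"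

lemma isop_op: "isop (\<lambda>k. op_apply R a (r k))"
  unfolding isop_def op_apply_r by (rule exI[of _ "length a"], rule exI[of _ "\<lambda>i. a ! i"]) simp

lemma isop_list: "isop f \<Longrightarrow> \<exists>a. \<forall>k. op_apply R a (r k) = f k"
proof -
  assume "isop f"
  then obtain N c where f: "\<And>k. f k = (\<Sum>i<N. c i * int (r (k + i)))" unfolding isop_def by blast
  show ?thesis
    by (rule exI[of _ "map c [0..<N]"]) (simp add: op_apply_r f)
qed

lemma sum_pad: "N1 \<le> (N::nat) \<Longrightarrow> (\<Sum>i<N. if i < N1 then g i else 0) = (\<Sum>i<N1. (g i :: int))"
  by (induction N) (auto simp: less_Suc_eq le_Suc_eq)

lemma isop_add: "isop f \<Longrightarrow> isop g \<Longrightarrow> isop (\<lambda>k. f k + g k)"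
proof -
  assume "isop f" "isop g"
  then obtain N1 c1 N2 c2 where f: "\<And>k. f k = (\<Sum>i<N1. c1 i * int (r (k + i)))"
    and g: "\<And>k. g k = (\<Sum>i<N2. c2 i * int (r (k + i)))" unfolding isop_def by metis
  have "f k + g k = (\<Sum>i<N1+N2. ((if i < N1 then c1 i else 0) + (if i < N2 then c2 i else 0)) * int (r (k + i)))" for k
  proof -
    have "(\<Sum>i<N1+N2. ((if i < N1 then c1 i else 0) + (if i < N2 then c2 i else 0)) * int (r (k + i)))
      = (\<Sum>i<N1+N2. if i < N1 then c1 i * int (r (k + i)) else 0) + (\<Sum>i<N1+N2. if i < N2 then c2 i * int (r (k + i)) else 0)"
      by (simp add: sum.distrib[symmetric] distrib_right) (rule sum.cong, auto)
    also have "\<dots> = f k + g k" by (simp add: sum_pad f g)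
    finally show ?thesis by simp
  qed
  then show ?thesis unfolding isop_def
    by (intro exI[of _ "N1+N2"] exI[of _ "\<lambda>i. (if i < N1 then c1 i else 0) + (if i < N2 then c2 i else 0)"]) blast
qed

lemma isop_mult: "isop f \<Longrightarrow> isop (\<lambda>k. c * f k)"
proof -
  assume "isop f"
  then obtain N c1 where f: "\<And>k. f k = (\<Sum>i<N. c1 i * int (r (k + i)))" unfolding isop_def by metis
  have "c * f k = (\<Sum>i<N. (c * c1 i) * int (r (k + i)))" for k
    by (simp add: f sum_distrib_left mult.assoc)
  then show ?thesis unfolding isop_def by (intro exI[of _ N] exI[of _ "\<lambda>i. c * c1 i"]) blast
qed

lemma isop_diff: "isop f \<Longrightarrow> isop g \<Longrightarrow> isop (\<lambda>k. f k - g k)"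
  using isop_add[of f "\<lambda>k. (-1) * g k"] isop_mult[of g "-1"] by simp

lemma isop_shift: "isop f \<Longrightarrow> isop (\<lambda>k. f (k + 1))"
proof -
  assume "isop f"
  then obtain N c where f: "\<And>k. f k = (\<Sum>i<N. c i * int (r (k + i)))" unfolding isop_def by metis
  have "f (k+1) = (\<Sum>i<Suc N. (case i of 0 \<Rightarrow> 0 | Suc j \<Rightarrow> c j) * int (r (k + i)))" for k
    by (simp only: sum.lessThan_Suc_shift f) simp
  then show ?thesis unfolding isop_def by blast
qed

lemma isop_shiftn: "isop f \<Longrightarrow> isop (\<lambda>k. f (k + m))"
proof (induction m)
  case (Suc m) then show ?case using isop_shift[of "\<lambda>k. f (k + m)"] by simp
qed simp

lemma isop_r: "isop (\<lambda>k. int (r (k + M)))"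
proof -
  have "int (r (k + M)) = (\<Sum>i<Suc M. (if i = M then 1 else 0) * int (r (k + i)))" for k
    by (simp add: if_distrib cong: if_cong)
  then show ?thesis unfolding isop_def by (intro exI[of _ "Suc M"] exI[of _ "\<lambda>i. if i = M then 1 else 0"]) blast
qed

end


locale spr = sp + assumes spa: "sparse R"
begin

lemma evpos_of_finite: "finite {z \<in> R. \<not> P z} \<Longrightarrow> \<exists>N. \<forall>k\<ge>N. P (r k)"
proof -
  assume "finite {z \<in> R. \<not> P z}"
  then obtain B where B: "\<And>z. z \<in> {z \<in> R. \<not> P z} \<Longrightarrow> z \<le> B"
    by (meson finite_nat_set_iff_bounded_le)
  show ?thesis
  proof (intro exI allI impI)
    fix k assume "Suc B \<le> k"
    then have "r k > B" using r_ge[of k] by simp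
    then show "P (r k)" using B r_in[of k] by fastforce
  qed
qed

lemma SP1: "isop f \<Longrightarrow> (\<forall>k. f k = 0) \<or> (\<exists>N. \<forall>k\<ge>N. f k > 0) \<or> (\<exists>N. \<forall>k\<ge>N. f k < 0)"
proof -
  assume "isop f"
  then obtain a where a: "\<And>k. op_apply R a (r k) = f k" using isop_list by blast
  from spa have "op_zero R a \<or> op_pos R a \<or> op_neg R a" unfolding sparse_def by blast
  then show ?thesis
  proof (elim disjE)
    assume "op_zero R a" then show ?thesis unfolding op_zero_def using a r_in by metis
  next
    assume "op_pos R a" then show ?thesis unfolding op_pos_def using a evpos_of_finite[of "\<lambda>z. op_apply R a z > 0"] by metis
  next
    assume "op_neg R a" then show ?thesis unfolding op_neg_def using a evpos_of_finite[of "\<lambda>z. op_apply R a z < 0"] by metis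
  qed
qed

lemma SP2: "isop f \<Longrightarrow> \<forall>k\<ge>N. f k > 0 \<Longrightarrow> \<exists>D. \<forall>k. f (k + D) > int (r k)"
proof -
  assume "isop f" and pos: "\<forall>k\<ge>N. f k > 0"
  then obtain a where a: "\<And>k. op_apply R a (r k) = f k" using isop_list by blast
  have "{z \<in> R. \<not> op_apply R a z > 0} \<subseteq> r ` {..<N}"
  proof
    fix z assume "z \<in> {z \<in> R. \<not> op_apply R a z > 0}"
    then obtain k where zk: "z = r k" using r_ex by blast
    with \<open>z \<in> {z \<in> R. \<not> op_apply R a z > 0}\<close> have "\<not> f k > 0" using a by simp
    note zk this
    then show "z \<in> r ` {..<N}" using pos by (metis imageI lessThan_iff not_le)
  qed
  then have "op_pos R a" unfolding op_pos_def by (meson finite_imageI finite_lessThan finite_subset)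
  with spa obtain D where "\<forall>z\<in>R. op_apply R a ((sigma R ^^ D) z) > int z" unfolding sparse_def by blast
  then show ?thesis using r_in a sigma_pow_r by metis
qed

lemma bound: "isop f \<Longrightarrow> \<exists>K::nat. \<exists>M. \<forall>k. \<bar>f k\<bar> \<le> int K * int (r (k + M))"
proof -
  assume "isop f"
  then obtain N c where f: "\<And>k. f k = (\<Sum>i<N. c i * int (r (k + i)))" unfolding isop_def by metis
  have "\<bar>f k\<bar> \<le> (\<Sum>i<N. \<bar>c i\<bar>) * int (r (k + N))" for k
  proof -
    have "\<bar>f k\<bar> \<le> (\<Sum>i<N. \<bar>c i * int (r (k + i))\<bar>)" unfolding f by (rule sum_abs)
    also have "\<dots> \<le> (\<Sum>i<N. \<bar>c i\<bar> * int (r (k + N)))"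
    proof (rule sum_mono)
      fix i assume "i \<in> {..<N}"
      then have "r (k + i) \<le> r (k + N)" using r_le_iff by simp
      then show "\<bar>c i * int (r (k + i))\<bar> \<le> \<bar>c i\<bar> * int (r (k + N))"
        by (simp add: abs_mult mult_left_mono)
    qed
    finally show ?thesis by (simp add: sum_distrib_right)
  qed
  moreover have "int (nat (\<Sum>i<N. \<bar>c i\<bar>)) = (\<Sum>i<N. \<bar>c i\<bar>)" by (simp add: sum_nonneg)
  ultimately show ?thesis by metis
qed

lemma growth:
  assumes d: "isop d" "\<forall>k\<ge>N. d k > 0"
  shows "\<exists>k. \<forall>x. d (x + k) > int c * int (r (x + M))"
proof (induction c)
  case 0
  from SP2[OF d] obtain D where "\<forall>k. d (k + D) > int (r k)" by blast
  then show ?case by (metis of_nat_0 mult_zero_left of_nat_0_le_iff order.strict_trans1)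
next
  case (Suc c)
  then obtain k where k: "\<forall>x. d (x + k) > int c * int (r (x + M))" by blast
  let ?h = "\<lambda>x. d (x + k) - int c * int (r (x + M))"
  have hi: "isop ?h" using isop_diff[OF isop_shiftn[OF d(1)] isop_mult[OF isop_r]] by simp
  have "\<forall>x\<ge>0. ?h x > 0" using k by simp
  from SP2[OF hi this] obtain D where D: "\<forall>x. ?h (x + D) > int (r x)" by blast
  have "d (x + (M + D + k)) > int (Suc c) * int (r (x + M))" for x
  proof -
    have "?h ((x + M) + D) > int (r (x + M))" using D by blast
    moreover have "r (x + M) \<le> r (x + M + D + M)" using r_le_iff by simp
    then have "int c * int (r (x + M)) \<le> int c * int (r (x + M + D + M))" by (simp add: mult_left_mono)
    ultimately show ?thesis by (simp add: algebra_simps)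
  qed
  then show ?case by blast
qed

lemma growth_mono:
  assumes "\<forall>x. d (x + k) > int c * int (r (x + M))" "k \<le> k'"
  shows "d (x + k') > int c * int (r (x + M))"
proof -
  have "d ((x + (k' - k)) + k) > int c * int (r ((x + (k' - k)) + M))" using assms(1) by blast
  moreover have "int c * int (r (x + M)) \<le> int c * int (r ((x + (k' - k)) + M))"
    using r_le_iff by (simp add: mult_left_mono)
  ultimately show ?thesis using assms(2) by simp
qed

lemma pos_props:
  assumes g: "isop g" "\<forall>k\<ge>N. g k > 0"
  shows "\<exists>k1. \<forall>k j. k1 \<le> k \<longrightarrow> k \<le> j \<longrightarrow> g k \<le> g j"
    and "\<exists>k2. \<forall>k\<ge>k2. \<forall>x. g (x + k + 1) - g (x + k) > int c * int (r (x + M))"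
proof -
  let ?d = "\<lambda>k. g (k + 1) - g k"
  have di: "isop ?d" using isop_diff[OF isop_shift[OF g(1)] g(1)] .
  have "\<exists>N'. \<forall>k\<ge>N'. ?d k > 0"
  proof -
    from SP1[OF di] show ?thesis
    proof (elim disjE)
      assume z: "\<forall>k. ?d k = 0"
      then have "g k = g 0" for k by (induction k) (auto simp: algebra_simps)
      moreover from SP2[OF g] obtain D where "\<forall>k. g (k + D) > int (r k)" by blast
      then have "g (nat (g 0) + D) > int (r (nat (g 0)))" by blast
      moreover have "int (nat (g 0)) \<le> int (r (nat (g 0)))" by (simp only: of_nat_le_iff r_ge)
      moreover have "g 0 \<le> int (nat (g 0))" by simp
      ultimately have False by (metis linorder_not_le order.trans order_less_le)
      then show ?thesis ..
    next
      assume "\<exists>N. \<forall>k\<ge>N. ?d k < 0"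
      then obtain N2 where N2: "\<forall>k\<ge>N2. ?d k < 0" by blast
      let ?m = "max N N2"
      have "g (?m + j) \<le> g ?m - int j" for j
      proof (induction j)
        case (Suc j)
        have "?d (?m + j) < 0" using N2 by simp
        with Suc show ?case by simp
      qed simp
      from this[of "nat (g ?m)"] have "g (?m + nat (g ?m)) \<le> 0"
        using g(2)[rule_format, of ?m] by (simp split: if_splits)
      moreover have "g (?m + nat (g ?m)) > 0" using g(2) by simp
      ultimately show ?thesis by simp
    qed simp
  qed
  then obtain N' where N': "\<forall>k\<ge>N'. ?d k > 0" by blast
  show "\<exists>k1. \<forall>k j. k1 \<le> k \<longrightarrow> k \<le> j \<longrightarrow> g k \<le> g j"
  proof (intro exI allI impI)
    fix k j assume "N' \<le> k" "k \<le> j"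
    then obtain t where j: "j = k + t" using le_Suc_ex by blast
    have "g k \<le> g (k + t)" for t
    proof (induction t)
      case (Suc t)
      have "?d (k + t) > 0" using N' \<open>N' \<le> k\<close> by simp
      with Suc show ?case by simp
    qed simp
    then show "g k \<le> g j" using j by simp
  qed
  from growth[OF di N', of c M] obtain k where k: "\<forall>x. ?d (x + k) > int c * int (r (x + M))" by blast
  show "\<exists>k2. \<forall>k\<ge>k2. \<forall>x. g (x + k + 1) - g (x + k) > int c * int (r (x + M))"
    using growth_mono[OF k] by blast
qed

end


lemma chain:
  fixes a :: "nat \<Rightarrow> nat"
  assumes "\<forall>i. Suc i < n \<longrightarrow> a (Suc i) + D \<le> a i" "e < i" "i < n"
  shows "a i + D \<le> a e"
proof -
  have "\<forall>j. Suc e + j < n \<longrightarrow> a (Suc e + j) + D \<le> a e"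
  proof (intro allI)
    fix j show "Suc e + j < n \<longrightarrow> a (Suc e + j) + D \<le> a e"
    proof (induction j)
      case 0 then show ?case using assms(1) by simp
    next
      case (Suc j)
      show ?case
      proof
        assume "Suc e + Suc j < n"
        then have "a (Suc (Suc e + j)) + D \<le> a (Suc e + j)" "Suc e + j < n" using assms(1) by auto
        with Suc show "a (Suc e + Suc j) + D \<le> a e" by simp
      qed
    qed
  qed
  then show ?thesis using assms(2,3) by (metis Suc_le_eq le_Suc_ex)
qed

context spr
begin

lemma choice2: "\<forall>i<n. \<exists>x y. P i x y \<Longrightarrow> \<exists>X Y. \<forall>i<n. P i (X i) (Y i)"
proof -
  assume "\<forall>i<n. \<exists>x y. P i x y"
  then have "\<forall>i\<in>{..<n}. \<exists>x y. P i x y" by simp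
  then obtain X where "\<forall>i\<in>{..<n}. \<exists>y. P i (X i) y" by (metis bchoice)
  then obtain Y where "\<forall>i\<in>{..<n}. P i (X i) (Y i)" by (metis bchoice)
  then show ?thesis by auto
qed

lemma core:
  fixes f :: "nat \<Rightarrow> nat \<Rightarrow> int" and s :: "nat \<Rightarrow> int"
  assumes fi: "\<forall>i<n. isop (\<lambda>k. s i * f i k) \<and> (\<exists>N. \<forall>k\<ge>N. s i * f i k > 0)"
    and s1: "\<forall>i<n. \<bar>s i\<bar> = 1"
  shows "\<exists>D0. \<forall>D\<ge>D0. \<forall>a b e. (\<forall>i<n. D \<le> a i) \<and> (\<forall>i. Suc i < n \<longrightarrow> a (Suc i) + D \<le> a i)
      \<and> (\<forall>i<n. D \<le> b i) \<and> (\<forall>i. Suc i < n \<longrightarrow> b (Suc i) + D \<le> b i)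
      \<and> e < n \<and> (\<forall>i<e. a i = b i) \<and> b e < a e
     \<longrightarrow> s e * (\<Sum>i<n. f i (a i) - f i (b i)) > 0"
proof -
  define g where "g i k = s i * f i k" for i k
  have gi: "\<forall>i<n. isop (g i) \<and> (\<exists>N. \<forall>k\<ge>N. g i k > 0)" using fi unfolding g_def by simp
  have absfg: "\<bar>f i k\<bar> = \<bar>g i k\<bar>" if "i < n" for i k
    using s1 that unfolding g_def by (simp add: abs_mult)
  have "\<forall>i<n. \<exists>K::nat. \<exists>M. \<forall>k. \<bar>g i k\<bar> \<le> int K * int (r (k + M))"
    using gi bound by blast
  from choice2[OF this] obtain K M where KM: "\<forall>i<n. \<forall>k. \<bar>g i k\<bar> \<le> int (K i) * int (r (k + M i))"
    by blast
  define Kt where "Kt = (\<Sum>i<n. K i)"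
  define Mt where "Mt = (\<Sum>i<n. M i)"
  have bnd: "\<bar>g i k\<bar> \<le> int Kt * int (r (k + Mt))" if "i < n" for i k
  proof -
    have "K i \<le> Kt" "M i \<le> Mt" unfolding Kt_def Mt_def using that
      by (auto intro!: member_le_sum)
    then have "r (k + M i) \<le> r (k + Mt)" "int (K i) \<le> int Kt" using r_le_iff by auto
    then have "int (K i) * int (r (k + M i)) \<le> int Kt * int (r (k + Mt))"
      by (simp add: mult_mono)
    moreover have "\<bar>g i k\<bar> \<le> int (K i) * int (r (k + M i))" using KM that by blast
    ultimately show ?thesis by linarith
  qed
  define C where "C = 2 * n * Kt"
  have "\<forall>i<n. \<exists>k1 k2. (\<forall>k j. k1 \<le> k \<longrightarrow> k \<le> j \<longrightarrow> g i k \<le> g i j) \<and>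
      (\<forall>k\<ge>k2. \<forall>x. g i (x + k + 1) - g i (x + k) > int C * int (r (x + Mt)))"
  proof (intro allI impI)
    fix i assume "i < n"
    then obtain N where "isop (g i)" "\<forall>k\<ge>N. g i k > 0" using gi by blast
    from pos_props(1)[OF this] pos_props(2)[OF this, of C Mt] show "\<exists>k1 k2. (\<forall>k j. k1 \<le> k \<longrightarrow> k \<le> j \<longrightarrow> g i k \<le> g i j) \<and>
      (\<forall>k\<ge>k2. \<forall>x. g i (x + k + 1) - g i (x + k) > int C * int (r (x + Mt)))" by blast
  qed
  from choice2[OF this] obtain k1 k2 where kk: "\<forall>i<n. (\<forall>k j. k1 i \<le> k \<longrightarrow> k \<le> j \<longrightarrow> g i k \<le> g i j) \<and>
      (\<forall>k\<ge>k2 i. \<forall>x. g i (x + k + 1) - g i (x + k) > int C * int (r (x + Mt)))" by blast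
  define D0 where "D0 = (\<Sum>i<n. k1 i + k2 i) + 1"
  show ?thesis
  proof (intro exI allI impI)
    fix D a b e
    assume D: "D0 \<le> D"
    assume H: "(\<forall>i<n. D \<le> a i) \<and> (\<forall>i. Suc i < n \<longrightarrow> a (Suc i) + D \<le> a i)
      \<and> (\<forall>i<n. D \<le> b i) \<and> (\<forall>i. Suc i < n \<longrightarrow> b (Suc i) + D \<le> b i)
      \<and> e < n \<and> (\<forall>i<e. a i = b i) \<and> b e < a e"
    then have en: "e < n" and bea: "b e < a e" and eq: "\<forall>i<e. a i = b i" by auto
    have "k1 e + k2 e \<le> (\<Sum>i<n. k1 i + k2 i)" using en by (intro member_le_sum) auto
    then have k1D: "k1 e \<le> D" and k2D: "k2 e \<le> D - 1" and D1: "1 \<le> D" using D unfolding D0_def by auto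
    define q where "q = a e - D"
    have aeD: "D \<le> a e" "D \<le> b e" using H en by auto
    have ae: "a e = q + (D - 1) + 1" using aeD D1 unfolding q_def by simp
    have "g e (b e) \<le> g e (q + (D - 1))"
      using kk en k1D aeD ae bea by auto
    moreover have "g e (q + (D - 1) + 1) - g e (q + (D - 1)) > int C * int (r (q + Mt))"
      using kk en k2D by blast
    ultimately have gap: "g e (a e) - g e (b e) > int C * int (r (q + Mt))" using ae by simp
    define h where "h i = f i (a i) - f i (b i)" for i
    have tail: "\<bar>h i\<bar> \<le> 2 * int Kt * int (r (q + Mt))" if "e < i" "i < n" for i
    proof -
      have "a i + D \<le> a e" "b i + D \<le> b e" using chain[of n a D e i] chain[of n b D e i] H that by auto
      then have "a i \<le> q" "b i \<le> q" using bea unfolding q_def by auto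
      then have "r (a i + Mt) \<le> r (q + Mt)" "r (b i + Mt) \<le> r (q + Mt)" using r_le_iff by auto
      then have "int Kt * int (r (a i + Mt)) \<le> int Kt * int (r (q + Mt))"
        "int Kt * int (r (b i + Mt)) \<le> int Kt * int (r (q + Mt))" by (simp_all add: mult_left_mono)
      moreover have "\<bar>h i\<bar> \<le> \<bar>g i (a i)\<bar> + \<bar>g i (b i)\<bar>" unfolding h_def
        using absfg[of i "a i"] absfg[of i "b i"] that abs_triangle_ineq4[of "f i (a i)" "f i (b i)"] by linarith
      ultimately show ?thesis using bnd[of i "a i"] bnd[of i "b i"] that by linarith
    qed
    have split: "{..<n} = {..<Suc e} \<union> {Suc e..<n}" using en by auto
    have "(\<Sum>i<n. h i) = (\<Sum>i<Suc e. h i) + (\<Sum>i\<in>{Suc e..<n}. h i)"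
      unfolding split by (rule sum.union_disjoint) auto
    also have "(\<Sum>i<Suc e. h i) = h e" using eq unfolding h_def by simp
    finally have tot: "(\<Sum>i<n. h i) = h e + (\<Sum>i\<in>{Suc e..<n}. h i)" .
    have "\<bar>\<Sum>i\<in>{Suc e..<n}. h i\<bar> \<le> (\<Sum>i\<in>{Suc e..<n}. \<bar>h i\<bar>)" by (rule sum_abs)
    also have "\<dots> \<le> (\<Sum>i\<in>{Suc e..<n}. 2 * int Kt * int (r (q + Mt)))"
      using tail by (intro sum_mono) auto
    also have "\<dots> = int (n - Suc e) * (2 * int Kt * int (r (q + Mt)))" by simp
    also have "\<dots> \<le> int n * (2 * int Kt * int (r (q + Mt)))" by (intro mult_right_mono) auto
    also have "\<dots> = int C * int (r (q + Mt))" unfolding C_def by simp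
    finally have T: "\<bar>\<Sum>i\<in>{Suc e..<n}. h i\<bar> \<le> int C * int (r (q + Mt))" .
    have "s e * h e = g e (a e) - g e (b e)" unfolding h_def g_def by (simp add: algebra_simps)
    moreover have "\<bar>s e * (\<Sum>i\<in>{Suc e..<n}. h i)\<bar> = \<bar>\<Sum>i\<in>{Suc e..<n}. h i\<bar>"
      using s1 en by (simp add: abs_mult)
    ultimately have "s e * (\<Sum>i<n. h i) > 0" unfolding tot distrib_left using gap T by linarith
    then show "s e * (\<Sum>i<n. f i (a i) - f i (b i)) > 0" unfolding h_def .
  qed
qed

end


context sp begin

lemma pos_neg_excl: "op_pos R a \<Longrightarrow> op_neg R a \<Longrightarrow> False"
proof -
  assume "op_pos R a" "op_neg R a"
  then have "finite ({z \<in> R. \<not> op_apply R a z > 0} \<union> {z \<in> R. \<not> op_apply R a z < 0})"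
    unfolding op_pos_def op_neg_def by simp
  moreover have "R \<subseteq> {z \<in> R. \<not> op_apply R a z > 0} \<union> {z \<in> R. \<not> op_apply R a z < 0}" by auto
  ultimately show False using inf finite_subset by blast
qed

lemma conv:
  assumes "z \<in> RnDelta R n D"
  shows "\<exists>a. length z = n \<and> (\<forall>i<n. z ! i = r (a i)) \<and> (\<forall>i<n. D \<le> a i) \<and> (\<forall>i. Suc i < n \<longrightarrow> a (Suc i) + D \<le> a i)"
proof -
  have len: "length z = n" and sub: "set z \<subseteq> R"
    and ch: "\<forall>i<n. z ! i \<ge> (sigma R ^^ D) (if Suc i < n then z ! Suc i else (LEAST x. x \<in> R))"
    using assms unfolding RnDelta_def by auto
  have "\<forall>i. \<exists>k. i < n \<longrightarrow> z ! i = r k" using sub len r_ex nth_mem by blast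
  then obtain a where a: "\<forall>i<n. z ! i = r (a i)" by metis
  have s: "a (Suc i) + D \<le> a i" if "Suc i < n" for i
  proof -
    have "i < n" using that by simp
    then have "z ! i \<ge> (sigma R ^^ D) (z ! Suc i)" using ch[rule_format, of i] that by simp
    then have "r (a i) \<ge> r (a (Suc i) + D)" using a that sigma_pow_r by auto
    then show ?thesis using r_le_iff by blast
  qed
  have "D \<le> a i" if "i < n" for i
  proof (cases "Suc i < n")
    case True then show ?thesis using s by fastforce
  next
    case False
    then have "z ! i \<ge> (sigma R ^^ D) (r 0)" using ch that least_R by auto
    then have "r (a i) \<ge> r D" using a that sigma_pow_r by auto
    then show ?thesis using r_le_iff by blast
  qed
  then show ?thesis using len a s by blast
qed

lemma dotop_r: "length As = n \<Longrightarrow> \<forall>i<n. z ! i = r (a i) \<Longrightarrow>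
    dotop R As z = (\<Sum>i<n. op_apply R (As ! i) (r (a i)))"
  unfolding dotop_def by simp

end

theorem mainTheorem6:
  fixes R :: "nat set" and n :: nat and As :: "int list list"
  assumes "infinite R" and "sparse R" and "n \<ge> 1" and "length As = n"
    and "\<forall>i<n. \<not> op_zero R (As ! i)"
  shows "\<exists>D0. \<forall>D\<ge>D0.
     (\<forall>z\<in>RnDelta R n D. \<forall>w\<in>RnDelta R n D. z \<noteq> w \<longrightarrow>
        (let e = (LEAST i. z ! i \<noteq> w ! i) in
          dotop R As z > dotop R As w \<longleftrightarrow>
            ((z ! e > w ! e \<and> op_pos R (As ! e)) \<or> (z ! e < w ! e \<and> op_neg R (As ! e)))))
     \<and> inj_on (dotop R As) (RnDelta R n D)"
proof -
  interpret spr R using assms(1,2) by unfold_locales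
  let ?r = "enumerate R"
  define f where "f i k = op_apply R (As ! i) (?r k)" for i k
  define s :: "nat \<Rightarrow> int" where "s i = (if op_pos R (As ! i) then 1 else -1)" for i
  have pn: "op_pos R (As ! i) \<or> op_neg R (As ! i)" if "i < n" for i
    using assms(2,5) that unfolding sparse_def by blast
  have negpos: "op_neg R (As ! i) \<longleftrightarrow> \<not> op_pos R (As ! i)" if "i < n" for i
    using pn[OF that] pos_neg_excl by blast
  have s1: "\<forall>i<n. \<bar>s i\<bar> = 1" unfolding s_def by simp
  have fi: "\<forall>i<n. isop (\<lambda>k. s i * f i k) \<and> (\<exists>N. \<forall>k\<ge>N. s i * f i k > 0)"
  proof (intro allI impI conjI)
    fix i assume i: "i < n"
    show "isop (\<lambda>k. s i * f i k)" unfolding f_def by (rule isop_mult[OF isop_op])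
    show "\<exists>N. \<forall>k\<ge>N. s i * f i k > 0"
    proof (cases "op_pos R (As ! i)")
      case True
      then show ?thesis unfolding s_def f_def op_pos_def
        using evpos_of_finite[of "\<lambda>z. op_apply R (As ! i) z > 0"] by simp
    next
      case False
      then have "op_neg R (As ! i)" using pn i by blast
      then show ?thesis using False unfolding s_def f_def op_neg_def
        using evpos_of_finite[of "\<lambda>z. op_apply R (As ! i) z < 0"] by simp
    qed
  qed
  from core[OF fi s1] obtain D0 where D0: "\<forall>D\<ge>D0. \<forall>a b e. (\<forall>i<n. D \<le> a i) \<and> (\<forall>i. Suc i < n \<longrightarrow> a (Suc i) + D \<le> a i)
      \<and> (\<forall>i<n. D \<le> b i) \<and> (\<forall>i. Suc i < n \<longrightarrow> b (Suc i) + D \<le> b i)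
      \<and> e < n \<and> (\<forall>i<e. a i = b i) \<and> b e < a e
     \<longrightarrow> s e * (\<Sum>i<n. f i (a i) - f i (b i)) > 0" by blast
  have key: "e < n \<and> z ! e \<noteq> w ! e \<and>
      (z ! e > w ! e \<longrightarrow> s e * (dotop R As z - dotop R As w) > 0) \<and>
      (z ! e < w ! e \<longrightarrow> s e * (dotop R As w - dotop R As z) > 0)"
    if D: "D \<ge> D0" and z: "z \<in> RnDelta R n D" and w: "w \<in> RnDelta R n D" and ne: "z \<noteq> w"
      and e: "e = (LEAST i. z ! i \<noteq> w ! i)" for D z w e
  proof -
    obtain a where a: "length z = n" "\<forall>i<n. z ! i = ?r (a i)" "\<forall>i<n. D \<le> a i" "\<forall>i. Suc i < n \<longrightarrow> a (Suc i) + D \<le> a i"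
      using conv[OF z] by blast
    obtain b where b: "length w = n" "\<forall>i<n. w ! i = ?r (b i)" "\<forall>i<n. D \<le> b i" "\<forall>i. Suc i < n \<longrightarrow> b (Suc i) + D \<le> b i"
      using conv[OF w] by blast
    obtain j where j: "j < n" "z ! j \<noteq> w ! j" using ne a(1) b(1) nth_equalityI by metis
    have ej: "e \<le> j" using j(2) unfolding e by (rule Least_le)
    have en: "e < n" using ej j by simp
    have zwe: "z ! e \<noteq> w ! e" using j(2) unfolding e by (rule LeastI)
    have eq: "\<forall>i<e. a i = b i"
    proof (intro allI impI)
      fix i assume "i < e"
      then have "z ! i = w ! i" using not_less_Least unfolding e by blast
      then show "a i = b i" using a(2) b(2) \<open>i < e\<close> en r_inj by auto
    qed
    have dz: "dotop R As z = (\<Sum>i<n. f i (a i))" using dotop_r[OF assms(4) a(2)] unfolding f_def by simp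
    have dw: "dotop R As w = (\<Sum>i<n. f i (b i))" using dotop_r[OF assms(4) b(2)] unfolding f_def by simp
    have c1: "s e * (dotop R As z - dotop R As w) > 0" if "z ! e > w ! e"
    proof -
      have "b e < a e" using that a(2) b(2) en r_less_iff by auto
      then have "s e * (\<Sum>i<n. f i (a i) - f i (b i)) > 0" using D0 D a b en eq by blast
      then show ?thesis unfolding dz dw by (simp add: sum_subtractf)
    qed
    have c2: "s e * (dotop R As w - dotop R As z) > 0" if "z ! e < w ! e"
    proof -
      have "a e < b e" using that a(2) b(2) en r_less_iff by auto
      then have "s e * (\<Sum>i<n. f i (b i) - f i (a i)) > 0" using D0 D a b en eq by (metis (no_types, lifting))
      then show ?thesis unfolding dz dw by (simp add: sum_subtractf)
    qed
    show ?thesis using en zwe c1 c2 by blast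
  qed
  show ?thesis
  proof (intro exI[of _ D0] allI impI conjI ballI)
    fix D z w assume D: "D0 \<le> D" and z: "z \<in> RnDelta R n D" and w: "w \<in> RnDelta R n D"
      and ne: "z \<noteq> w"
    show "let e = (LEAST i. z ! i \<noteq> w ! i) in
          dotop R As z > dotop R As w \<longleftrightarrow>
            ((z ! e > w ! e \<and> op_pos R (As ! e)) \<or> (z ! e < w ! e \<and> op_neg R (As ! e)))"
    proof -
      define e where "e = (LEAST i. z ! i \<noteq> w ! i)"
      note k = key[OF D z w ne e_def]
      have "dotop R As z > dotop R As w \<longleftrightarrow>
            ((z ! e > w ! e \<and> op_pos R (As ! e)) \<or> (z ! e < w ! e \<and> op_neg R (As ! e)))"
      proof (cases "z ! e > w ! e")
        case True
        then have "s e * (dotop R As z - dotop R As w) > 0" using k by blast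
        then show ?thesis using True negpos[of e] k unfolding s_def
          by (auto split: if_splits)
      next
        case False
        then have lt: "z ! e < w ! e" using k by auto
        then have "s e * (dotop R As w - dotop R As z) > 0" using k by blast
        then show ?thesis using lt negpos[of e] k unfolding s_def
          by (auto split: if_splits)
      qed
      then show "let e = (LEAST i. z ! i \<noteq> w ! i) in
          dotop R As z > dotop R As w \<longleftrightarrow>
            ((z ! e > w ! e \<and> op_pos R (As ! e)) \<or> (z ! e < w ! e \<and> op_neg R (As ! e)))"
        unfolding e_def Let_def .
    qed
  next
    fix D assume D: "D0 \<le> D"
    show "inj_on (dotop R As) (RnDelta R n D)"
    proof (rule inj_onI, rule ccontr)
      fix z w assume z: "z \<in> RnDelta R n D" and w: "w \<in> RnDelta R n D"
        and eqd: "dotop R As z = dotop R As w" and ne: "z \<noteq> w"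
      note k = key[OF D z w ne refl]
      show False using k eqd by (cases "z ! (LEAST i. z ! i \<noteq> w ! i) < w ! (LEAST i. z ! i \<noteq> w ! i)") auto
    qed
  qed
qed


end
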